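(* The Banach space $c_0$ (real or complex) has the $\mathbf{L}_{p,p}$-nu.
   Context: For a Banach space $X$: $\Pi(X)=\{(x,x^* )\in S_X\times S_{X^*}: x^*(x)=1\}$; for $T\in\mathcal{L}(X)$ (bounded linear operators on $X$), $v(T)=\sup\{|x^*(Tx)|:(x,x^* )\in\Pi(X)\}$. $X$ has the $\mathbf{L}_{p,p}$-nu if for every $\varepsilon>0$ and $(x,x^* )\in\Pi(X)$ there is $\eta(\varepsilon,(x,x^* ))>0$ such that whenever $T\in\mathcal{L}(X)$ with $v(T)=1$ satisfies $|x^*(Tx)|>1-\eta(\varepsilon,(x,x^* ))$, there is $S\in\mathcal{L}(X)$ with $v(S)=1$, $|x^*(Sx)|=1$ and $\|S-T\|<\varepsilon$. *)

theory Defs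
  imports "HOL-Analysis.Analysis"
begin

text \<open>Operators and functionals are 'a-linear (hence complex-linear in the complex case)
  and bounded on c_0; their values outside c_0 are irrelevant.\<close>

definition c0 :: "(nat \<Rightarrow> 'a::real_normed_field) set" where
  "c0 = {x. x \<longlonglongrightarrow> 0}"

definition c0_norm :: "(nat \<Rightarrow> 'a::real_normed_field) \<Rightarrow> real" where
  "c0_norm x = (SUP n. norm (x n))"

definition c0_ball :: "(nat \<Rightarrow> 'a::real_normed_field) set" where
  "c0_ball = {x \<in> c0. c0_norm x \<le> 1}"

definition c0_op :: "((nat \<Rightarrow> 'a::real_normed_field) \<Rightarrow> (nat \<Rightarrow> 'a)) \<Rightarrow> bool" where
  "c0_op T \<longleftrightarrow>
     (\<forall>x\<in>c0. T x \<in> c0) \<and>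
     (\<forall>x\<in>c0. \<forall>y\<in>c0. T (\<lambda>n. x n + y n) = (\<lambda>n. T x n + T y n)) \<and>
     (\<forall>c. \<forall>x\<in>c0. T (\<lambda>n. c * x n) = (\<lambda>n. c * T x n)) \<and>
     (\<exists>C. \<forall>x\<in>c0. c0_norm (T x) \<le> C * c0_norm x)"

definition c0_op_norm :: "((nat \<Rightarrow> 'a::real_normed_field) \<Rightarrow> (nat \<Rightarrow> 'a)) \<Rightarrow> real" where
  "c0_op_norm T = (SUP x\<in>c0_ball. c0_norm (T x))"

definition c0_functional :: "((nat \<Rightarrow> 'a::real_normed_field) \<Rightarrow> 'a) \<Rightarrow> bool" where
  "c0_functional f \<longleftrightarrow>
     (\<forall>x\<in>c0. \<forall>y\<in>c0. f (\<lambda>n. x n + y n) = f x + f y) \<and>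
     (\<forall>c. \<forall>x\<in>c0. f (\<lambda>n. c * x n) = c * f x) \<and>
     (\<exists>C. \<forall>x\<in>c0. norm (f x) \<le> C * c0_norm x)"

definition c0_dual_norm :: "((nat \<Rightarrow> 'a::real_normed_field) \<Rightarrow> 'a) \<Rightarrow> real" where
  "c0_dual_norm f = (SUP x\<in>c0_ball. norm (f x))"

definition c0_Pi :: "((nat \<Rightarrow> 'a::real_normed_field) \<times> ((nat \<Rightarrow> 'a) \<Rightarrow> 'a)) set" where
  "c0_Pi = {(x, f). x \<in> c0 \<and> c0_norm x = 1 \<and> c0_functional f \<and> c0_dual_norm f = 1 \<and> f x = 1}"

definition c0_numrad :: "((nat \<Rightarrow> 'a::real_normed_field) \<Rightarrow> (nat \<Rightarrow> 'a)) \<Rightarrow> real" where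
  "c0_numrad T = (SUP p\<in>(c0_Pi :: ((nat \<Rightarrow> 'a) \<times> ((nat \<Rightarrow> 'a) \<Rightarrow> 'a)) set).
                     norm (snd p (T (fst p))))"

definition c0_Lpp_nu :: "'a::real_normed_field itself \<Rightarrow> bool" where
  "c0_Lpp_nu _ \<longleftrightarrow>
    (\<forall>\<epsilon>>0. \<forall>(x, f) \<in> (c0_Pi :: ((nat \<Rightarrow> 'a) \<times> ((nat \<Rightarrow> 'a) \<Rightarrow> 'a)) set).
      \<exists>\<eta>>0. \<forall>T :: (nat \<Rightarrow> 'a) \<Rightarrow> (nat \<Rightarrow> 'a).
        c0_op T \<and> c0_numrad T = 1 \<and> norm (f (T x)) > 1 - \<eta> \<longrightarrow>
        (\<exists>S :: (nat \<Rightarrow> 'a) \<Rightarrow> (nat \<Rightarrow> 'a).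
           c0_op S \<and> c0_numrad S = 1 \<and> norm (f (S x)) = 1 \<and>
           c0_op_norm (\<lambda>y n. S y n - T y n) < \<epsilon>))"

end

theory Submission
  imports Defs
begin

definition ee :: "nat \<Rightarrow> nat \<Rightarrow> 'a::real_normed_field" where
  "ee k = (\<lambda>n. if n = k then 1 else 0)"

lemma c0_bdd: "x \<in> c0 \<Longrightarrow> bdd_above (range (\<lambda>n. norm (x n)))"
proof -
  assume "x \<in> c0"
  then have "Bseq x" unfolding c0_def using convergent_imp_Bseq convergentI by blast
  then obtain K where "\<forall>n. norm (x n) \<le> K" unfolding Bseq_def by auto
  then show ?thesis by (auto intro: bdd_aboveI2)
qed

lemma c0_norm_ge: "x \<in> c0 \<Longrightarrow> norm (x n) \<le> c0_norm x"
  unfolding c0_norm_def by (rule cSUP_upper) (auto simp: c0_bdd)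

lemma c0_norm_le: "(\<And>n. norm (x n) \<le> M) \<Longrightarrow> c0_norm x \<le> M"
  unfolding c0_norm_def by (rule cSUP_least) auto

lemma c0_norm_nonneg: "x \<in> c0 \<Longrightarrow> 0 \<le> c0_norm x"
  using c0_norm_ge[of x 0] norm_ge_zero order_trans by blast

lemma c0_norm_zero: "x \<in> c0 \<Longrightarrow> c0_norm x = 0 \<Longrightarrow> x = (\<lambda>n. 0)"
  using c0_norm_ge[of x] by fastforce

lemma c0_zero[simp]: "(\<lambda>n. 0) \<in> c0" unfolding c0_def by simp

lemma c0_norm_zero'[simp]: "c0_norm (\<lambda>n. 0::'a::real_normed_field) = 0"
  unfolding c0_norm_def by simp

lemma c0_add: "x \<in> c0 \<Longrightarrow> y \<in> c0 \<Longrightarrow> (\<lambda>n. x n + y n) \<in> c0"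
  unfolding c0_def using tendsto_add by fastforce

lemma c0_diff: "x \<in> c0 \<Longrightarrow> y \<in> c0 \<Longrightarrow> (\<lambda>n. x n - y n) \<in> c0"
  unfolding c0_def using tendsto_diff by fastforce

lemma c0_scale: "x \<in> c0 \<Longrightarrow> (\<lambda>n. c * x n) \<in> c0"
  unfolding c0_def using tendsto_mult_right_zero by blast

lemma c0_finmod: assumes "x \<in> c0" "finite B" "\<And>n. n \<notin> B \<Longrightarrow> y n = x n" shows "y \<in> c0"
proof -
  obtain N where "B \<subseteq> {..<N}" using assms(2) finite_nat_bounded by blast
  then have "\<forall>n\<ge>N. x n = y n" using assms(3) by (metis lessThan_iff not_le subsetD)
  then have "\<forall>\<^sub>F n in sequentially. x n = y n"
    by (auto simp: eventually_sequentially)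
  then show ?thesis using assms(1) unfolding c0_def using Lim_transform_eventually by blast
qed

lemma c0_finsupp: assumes "finite B" "\<And>n. n \<notin> B \<Longrightarrow> y n = 0" shows "y \<in> c0"
  using c0_finmod[OF c0_zero assms] .

lemma c0_sum: "finite B \<Longrightarrow> (\<And>j. j \<in> B \<Longrightarrow> v j \<in> c0) \<Longrightarrow> (\<lambda>n. \<Sum>j\<in>B. v j n) \<in> c0"
  by (induction B rule: finite_induct) (auto intro: c0_add)

lemma ee_c0[simp]: "ee k \<in> c0"
  by (rule c0_finsupp[of "{k}"]) (auto simp: ee_def)

lemma c0_norm_scale: assumes "x \<in> c0" shows "c0_norm (\<lambda>n. c * x n) = norm c * c0_norm x"
proof (cases "c = 0")
  case True then show ?thesis by simp
next
  case False
  have "c0_norm (\<lambda>n. c * x n) \<le> norm c * c0_norm x"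
    by (rule c0_norm_le) (simp add: norm_mult assms c0_norm_ge mult_left_mono)
  moreover have "norm c * c0_norm x \<le> c0_norm (\<lambda>n. c * x n)"
  proof -
    have "c0_norm x \<le> c0_norm (\<lambda>n. c * x n) / norm c"
    proof (rule c0_norm_le)
      fix n
      have "norm (c * x n) \<le> c0_norm (\<lambda>n. c * x n)" using c0_norm_ge[OF c0_scale[OF assms]] .
      then show "norm (x n) \<le> c0_norm (\<lambda>n. c * x n) / norm c"
        using False by (simp add: norm_mult field_simps)
    qed
    then show ?thesis using False by (simp add: field_simps)
  qed
  ultimately show ?thesis by simp
qed

lemma ee_norm[simp]: "c0_norm (ee k :: nat \<Rightarrow> 'a::real_normed_field) = 1"
proof (rule antisym)
  show "c0_norm (ee k :: nat \<Rightarrow> 'a) \<le> 1" by (rule c0_norm_le) (simp add: ee_def)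
  show "1 \<le> c0_norm (ee k :: nat \<Rightarrow> 'a)" using c0_norm_ge[OF ee_c0, of k k] by (simp add: ee_def)
qed

lemma ball0: "(\<lambda>n. 0) \<in> c0_ball" unfolding c0_ball_def by simp

lemma scale_bound:
  fixes h :: "(nat \<Rightarrow> 'a::real_normed_field) \<Rightarrow> 'a"
  assumes hom: "\<And>c x. x \<in> c0 \<Longrightarrow> h (\<lambda>n. c * x n) = c * h x"
    and B: "\<And>y. y \<in> c0_ball \<Longrightarrow> norm (h y) \<le> B" and u: "u \<in> c0"
  shows "norm (h u) \<le> B * c0_norm u"
proof (cases "c0_norm u = 0")
  case True
  then have u0: "u = (\<lambda>n. 0)" using c0_norm_zero u by blast
  have "h (\<lambda>n. 0) = h (\<lambda>n. 0 * (0::'a))" by simp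
  also have "\<dots> = 0" using hom[of "\<lambda>n. 0" 0] by simp
  finally show ?thesis using u0 True by simp
next
  case False
  define s where "s = c0_norm u"
  have s: "s > 0" using False c0_norm_nonneg[OF u] s_def by simp
  define y where "y = (\<lambda>n. of_real (1/s) * u n)"
  have yc: "y \<in> c0" unfolding y_def using c0_scale[OF u] .
  have "c0_norm y = 1" unfolding y_def using c0_norm_scale[OF u, of "of_real (1/s)"] s s_def by (simp add: norm_divide)
  then have yb: "y \<in> c0_ball" using yc unfolding c0_ball_def by simp
  have "u = (\<lambda>n. of_real s * y n)" unfolding y_def using s by (auto simp: field_simps)
  then have "h u = of_real s * h y" using hom[OF yc] by simp
  then have "norm (h u) = s * norm (h y)" using s by (simp add: norm_mult)
  also have "\<dots> \<le> s * B" using B[OF yb] s by simp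
  finally show ?thesis using s_def by (simp add: mult.commute)
qed

definition lin1 :: "((nat \<Rightarrow> 'a::real_normed_field) \<Rightarrow> 'a) \<Rightarrow> bool" where
  "lin1 g \<longleftrightarrow> (\<forall>x\<in>c0. \<forall>y\<in>c0. g (\<lambda>n. x n + y n) = g x + g y) \<and>
     (\<forall>c. \<forall>x\<in>c0. g (\<lambda>n. c * x n) = c * g x) \<and> (\<forall>x\<in>c0. norm (g x) \<le> c0_norm x)"

lemma lin1_add: "lin1 g \<Longrightarrow> x \<in> c0 \<Longrightarrow> y \<in> c0 \<Longrightarrow> g (\<lambda>n. x n + y n) = g x + g y"
  unfolding lin1_def by blast
lemma lin1_hom: "lin1 g \<Longrightarrow> x \<in> c0 \<Longrightarrow> g (\<lambda>n. c * x n) = c * g x"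
  unfolding lin1_def by blast
lemma lin1_bnd: "lin1 g \<Longrightarrow> x \<in> c0 \<Longrightarrow> norm (g x) \<le> c0_norm x"
  unfolding lin1_def by blast
lemma lin1_zero: "lin1 g \<Longrightarrow> g (\<lambda>n. 0) = 0"
  using lin1_hom[of g "\<lambda>n. 0" 0] by simp

lemma lin1_sum: assumes g: "lin1 g" shows "finite B \<Longrightarrow> (\<And>j. j \<in> B \<Longrightarrow> v j \<in> c0) \<Longrightarrow>
   g (\<lambda>n. \<Sum>j\<in>B. v j n) = (\<Sum>j\<in>B. g (v j))"
proof (induction B rule: finite_induct)
  case empty then show ?case using lin1_zero[OF g] by simp
next
  case (insert a F)
  have "g (\<lambda>n. \<Sum>j\<in>insert a F. v j n) = g (\<lambda>n. v a n + (\<Sum>j\<in>F. v j n))"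
    using insert by simp
  also have "\<dots> = g (v a) + g (\<lambda>n. \<Sum>j\<in>F. v j n)"
    using insert by (intro lin1_add[OF g]) (auto intro: c0_sum)
  finally show ?case using insert by simp
qed

lemma dual_bound: fixes g :: "(nat \<Rightarrow> 'a::real_normed_field) \<Rightarrow> 'a"
  assumes g: "c0_functional g" and u: "u \<in> c0"
  shows "norm (g u) \<le> c0_dual_norm g * c0_norm u"
proof (rule scale_bound[where h=g, OF _ _ u])
  show "\<And>c x. x \<in> c0 \<Longrightarrow> g (\<lambda>n. c * x n) = c * g x" using g unfolding c0_functional_def by blast
  obtain C where C: "\<forall>x\<in>c0. norm (g x) \<le> C * c0_norm x" using g unfolding c0_functional_def by blast
  have "bdd_above ((\<lambda>x. norm (g x)) ` c0_ball)"
  proof (rule bdd_aboveI2)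
    fix x :: "nat \<Rightarrow> 'a" assume "x \<in> c0_ball"
    then have "x \<in> c0" "c0_norm x \<le> 1" "0 \<le> c0_norm x" unfolding c0_ball_def using c0_norm_nonneg by auto
    then have "norm (g x) \<le> C * c0_norm x" using C by blast
    also have "\<dots> \<le> \<bar>C\<bar> * c0_norm x" using \<open>0 \<le> c0_norm x\<close> by (simp add: mult_right_mono)
    also have "\<dots> \<le> \<bar>C\<bar>" using \<open>c0_norm x \<le> 1\<close> \<open>0 \<le> c0_norm x\<close> by (simp add: mult_left_le)
    finally show "norm (g x) \<le> \<bar>C\<bar>" .
  qed
  then show "\<And>y. y \<in> c0_ball \<Longrightarrow> norm (g y) \<le> c0_dual_norm g"
    unfolding c0_dual_norm_def by (intro cSUP_upper) auto
qed

lemma functional_lin1: assumes "c0_functional g" "c0_dual_norm g = 1" shows "lin1 g"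
  using assms dual_bound[OF assms(1)] unfolding lin1_def c0_functional_def by auto

lemma align: fixes u v :: "'a::real_normed_field" shows "\<exists>\<omega>::'a. norm \<omega> = 1 \<and> norm (u + \<omega> * v) = norm u + norm v"
proof (cases "u = 0 \<or> v = 0")
  case True then show ?thesis by (auto intro!: exI[of _ 1])
next
  case False
  define \<omega> where "\<omega> = (u / of_real (norm u)) * (of_real (norm v) / v)"
  have "norm \<omega> = 1" using False by (simp add: \<omega>_def norm_mult norm_divide)
  moreover have eq: "u + \<omega> * v = u * of_real (1 + norm v / norm u)"
    using False by (simp add: \<omega>_def field_simps)
  have n: "norm (of_real (1 + norm v / norm u) :: 'a) = 1 + norm v / norm u"
    by (simp only: norm_of_real) simp
  have "norm (u + \<omega> * v) = norm u * (1 + norm v / norm u)"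
    unfolding eq norm_mult n ..
  then have "norm (u + \<omega> * v) = norm u + norm v"
    using False by (simp add: field_simps)
  ultimately show ?thesis by blast
qed

lemma op_bnd: "c0_op T \<Longrightarrow> \<exists>C. \<forall>x\<in>c0. c0_norm (T x) \<le> C * c0_norm x"
  unfolding c0_op_def by blast
lemma op_c0: "c0_op T \<Longrightarrow> x \<in> c0 \<Longrightarrow> T x \<in> c0"
  unfolding c0_op_def by blast
lemma op_add: "c0_op T \<Longrightarrow> x \<in> c0 \<Longrightarrow> y \<in> c0 \<Longrightarrow> T (\<lambda>n. x n + y n) = (\<lambda>n. T x n + T y n)"
  unfolding c0_op_def by blast
lemma op_hom: "c0_op T \<Longrightarrow> x \<in> c0 \<Longrightarrow> T (\<lambda>n. c * x n) = (\<lambda>n. c * T x n)"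
  unfolding c0_op_def by blast

lemma Pi_D: "(z, g) \<in> c0_Pi \<Longrightarrow> z \<in> c0 \<and> c0_norm z = 1 \<and> c0_functional g \<and> c0_dual_norm g = 1 \<and> g z = 1"
  unfolding c0_Pi_def by blast

lemma Pi_bound: fixes T :: "(nat \<Rightarrow> 'a::real_normed_field) \<Rightarrow> (nat \<Rightarrow> 'a)"
  assumes "(z, g) \<in> c0_Pi" "T z \<in> c0"
  shows "norm (g (T z)) \<le> c0_norm (T z)"
  using dual_bound[of g "T z"] Pi_D[OF assms(1)] assms(2) by simp

lemma numrad_bdd: fixes T :: "(nat \<Rightarrow> 'a::real_normed_field) \<Rightarrow> (nat \<Rightarrow> 'a)"
  assumes T: "c0_op T"
  shows "bdd_above ((\<lambda>p. norm (snd p (T (fst p)))) ` (c0_Pi :: ((nat \<Rightarrow> 'a) \<times> ((nat \<Rightarrow> 'a) \<Rightarrow> 'a)) set))"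
proof -
  obtain C where C: "\<forall>x\<in>c0. c0_norm (T x) \<le> C * c0_norm x" using op_bnd[OF T] by blast
  show ?thesis
  proof (rule bdd_aboveI2)
    fix p :: "(nat \<Rightarrow> 'a) \<times> ((nat \<Rightarrow> 'a) \<Rightarrow> 'a)" assume p: "p \<in> c0_Pi"
    obtain z g where pz: "p = (z, g)" by (cases p)
    have D: "z \<in> c0" "c0_norm z = 1" using Pi_D p pz by blast+
    have "norm (g (T z)) \<le> c0_norm (T z)" using Pi_bound p pz op_c0[OF T D(1)] by blast
    also have "\<dots> \<le> C" using C D by force
    finally show "norm (snd p (T (fst p))) \<le> C" using pz by simp
  qed
qed

lemma numrad_upper: fixes T :: "(nat \<Rightarrow> 'a::real_normed_field) \<Rightarrow> (nat \<Rightarrow> 'a)"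
  assumes T: "c0_op T" and p: "(z, g) \<in> c0_Pi"
  shows "norm (g (T z)) \<le> c0_numrad T"
  unfolding c0_numrad_def using cSUP_upper[OF p numrad_bdd[OF T]] by simp

lemma op_row_bound: fixes T :: "(nat \<Rightarrow> 'a::real_normed_field) \<Rightarrow> (nat \<Rightarrow> 'a)"
  assumes T: "c0_op T" and y: "y \<in> c0_ball"
  shows "norm (T y k) \<le> c0_numrad T"
proof -
  have yc: "y \<in> c0" and yn: "c0_norm y \<le> 1" using y unfolding c0_ball_def by auto
  have yk: "norm (y n) \<le> 1" for n using c0_norm_ge[OF yc, of n] yn by simp
  define t where "t = T (ee k) k"
  define u where "u = T y k - y k * t"
  obtain \<omega>' :: 'a where w': "norm \<omega>' = 1" "norm (t + \<omega>' * u) = norm t + norm u" using align by blast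
  define \<omega> where "\<omega> = inverse \<omega>'"
  have w0: "\<omega> \<noteq> 0" "norm \<omega> = 1" using w' by (auto simp: \<omega>_def norm_inverse)
  define z where "z = (\<lambda>n. if n = k then \<omega> else y n)"
  have zc: "z \<in> c0" by (rule c0_finmod[OF yc, of "{k}"]) (auto simp: z_def)
  have zn: "c0_norm z = 1"
  proof (rule antisym)
    show "c0_norm z \<le> 1" by (rule c0_norm_le) (auto simp: z_def w0 yk)
    show "1 \<le> c0_norm z" using c0_norm_ge[OF zc, of k] w0 by (simp add: z_def)
  qed
  define g where "g = (\<lambda>v::nat \<Rightarrow> 'a. v k / \<omega>)"
  have gb: "norm (g v) \<le> c0_norm v" if "v \<in> c0" for v
    using c0_norm_ge[OF that, of k] w0 by (simp add: g_def norm_divide)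
  have gf: "c0_functional g" unfolding c0_functional_def
    by (auto simp: g_def add_divide_distrib intro!: exI[of _ 1] gb[unfolded g_def])
  have gd: "c0_dual_norm g = 1"
  proof (rule antisym)
    show "c0_dual_norm g \<le> 1" unfolding c0_dual_norm_def
    proof (rule cSUP_least)
      show "c0_ball \<noteq> ({} :: (nat \<Rightarrow> 'a) set)" using ball0 by blast
      fix x :: "nat \<Rightarrow> 'a" assume "x \<in> c0_ball" then show "norm (g x) \<le> 1"
        using gb[of x] unfolding c0_ball_def by auto
    qed
    have "ee k \<in> c0_ball" by (simp add: c0_ball_def)
    moreover have "bdd_above ((\<lambda>x. norm (g x)) ` c0_ball)"
      by (rule bdd_aboveI2[of _ _ 1]) (use gb in \<open>auto simp: c0_ball_def intro: order_trans\<close>)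
    ultimately have "norm (g (ee k)) \<le> c0_dual_norm g" unfolding c0_dual_norm_def by (rule cSUP_upper)
    then show "1 \<le> c0_dual_norm g" using w0 by (simp add: g_def ee_def norm_divide)
  qed
  have gz: "g z = 1" using w0 by (simp add: g_def z_def)
  have Pi: "(z, g) \<in> c0_Pi" unfolding c0_Pi_def using zc zn gf gd gz by blast
  have zeq: "z = (\<lambda>n. y n + (\<omega> - y k) * ee k n)" by (auto simp: z_def ee_def)
  have "T z = (\<lambda>n. T y n + T (\<lambda>n. (\<omega> - y k) * ee k n) n)"
    unfolding zeq by (rule op_add[OF T yc c0_scale[OF ee_c0]])
  also have "\<dots> = (\<lambda>n. T y n + (\<omega> - y k) * T (ee k) n)"
    using op_hom[OF T ee_c0] by simp
  finally have "g (T z) = (T y k + (\<omega> - y k) * t) / \<omega>" by (simp add: g_def t_def)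
  also have "\<dots> = t + \<omega>' * u" using w0 by (simp add: u_def \<omega>_def field_simps)
  finally have gTz: "norm (g (T z)) = norm t + norm u" using w' by simp
  have "norm (T y k) = norm (u + y k * t)" by (simp add: u_def)
  also have "\<dots> \<le> norm u + norm (y k) * norm t" by (metis norm_mult norm_triangle_ineq)
  also have "\<dots> \<le> norm u + norm t" using yk[of k] by (simp add: mult_left_le_one_le)
  also have "\<dots> = norm (g (T z))" using gTz by simp
  also have "\<dots> \<le> c0_numrad T" by (rule numrad_upper[OF T Pi])
  finally show ?thesis .
qed

lemma op_norm1: fixes T :: "(nat \<Rightarrow> 'a::real_normed_field) \<Rightarrow> (nat \<Rightarrow> 'a)"
  assumes T: "c0_op T" and v: "c0_numrad T = 1" and y: "y \<in> c0"
  shows "norm (T y k) \<le> c0_norm y"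
  using scale_bound[where h="\<lambda>y. T y k" and B=1, OF _ _ y] op_row_bound[OF T, of _ k] v op_hom[OF T]
  by simp

lemma row_lin1: fixes T :: "(nat \<Rightarrow> 'a::real_normed_field) \<Rightarrow> (nat \<Rightarrow> 'a)"
  assumes T: "c0_op T" and v: "c0_numrad T = 1"
  shows "lin1 (\<lambda>y. T y k)"
  unfolding lin1_def using op_norm1[OF T v] op_add[OF T] op_hom[OF T] by simp

definition prj :: "nat set \<Rightarrow> (nat \<Rightarrow> 'a::real_normed_field) \<Rightarrow> nat \<Rightarrow> 'a" where
  "prj B y = (\<lambda>n. if n \<in> B then y n else 0)"

lemma prj_sum: "finite B \<Longrightarrow> prj B y = (\<lambda>n. \<Sum>j\<in>B. y j * ee j n)"
  by (auto simp: prj_def ee_def fun_eq_iff if_distrib sum.delta cong: if_cong)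

lemma lin1_prj: assumes g: "lin1 g" and B: "finite B"
  shows "g (prj B y) = (\<Sum>j\<in>B. y j * g (ee j))"
proof -
  have "g (prj B y) = (\<Sum>j\<in>B. g (\<lambda>n. y j * ee j n))"
    unfolding prj_sum[OF B] by (rule lin1_sum[OF g B]) (simp add: c0_scale)
  also have "\<dots> = (\<Sum>j\<in>B. y j * g (ee j))" using lin1_hom[OF g ee_c0] by simp
  finally show ?thesis .
qed

lemma norming: fixes g :: "(nat \<Rightarrow> 'a::real_normed_field) \<Rightarrow> 'a"
  assumes g: "lin1 g" and B: "finite B"
  shows "(\<Sum>j\<in>B. norm (g (ee j))) \<le> 1"
proof -
  define w where "w j = (if g (ee j) = 0 then 1 else of_real (norm (g (ee j))) / g (ee j))" for j
  have w1: "norm (w j) = 1" for j by (simp add: w_def norm_divide)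
  have wg: "w j * g (ee j) = of_real (norm (g (ee j)))" for j by (simp add: w_def)
  define v where "v = prj B w"
  have vc: "v \<in> c0" unfolding v_def by (rule c0_finsupp[OF B]) (simp add: prj_def)
  have vn: "c0_norm v \<le> 1" by (rule c0_norm_le) (simp add: v_def prj_def w1)
  have "g v = (\<Sum>j\<in>B. of_real (norm (g (ee j))))" unfolding v_def lin1_prj[OF g B] wg ..
  then have "norm (g v) = (\<Sum>j\<in>B. norm (g (ee j)))"
    by (simp only: of_real_sum[symmetric] norm_of_real) (simp add: sum_nonneg)
  then show ?thesis using lin1_bnd[OF g vc] vn by simp
qed

locale gapset =
  fixes x :: "nat \<Rightarrow> 'a::real_normed_field" and A :: "nat set" and \<gamma> :: real
  assumes xc: "x \<in> c0" and xn: "c0_norm x = 1" and Adef: "A = {j. norm (x j) = 1}"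
    and fin: "finite A" and \<gamma>0: "0 < \<gamma>" and \<gamma>1: "\<gamma> < 1" and off: "\<And>j. j \<notin> A \<Longrightarrow> norm (x j) \<le> \<gamma>"
begin

lemma xle: "norm (x n) \<le> 1" using c0_norm_ge[OF xc, of n] xn by simp

lemma Qc: "y \<in> c0 \<Longrightarrow> prj (-A) y \<in> c0"
  by (rule c0_finmod[OF _ fin]) (auto simp: prj_def)
lemma Pc: "prj A y \<in> c0"
  by (rule c0_finsupp[OF fin]) (auto simp: prj_def)
lemma split: "y = (\<lambda>n. prj A y n + prj (-A) y n)"
  by (auto simp: prj_def)

lemma G1: assumes g: "lin1 g" and y: "y \<in> c0_ball"
  shows "norm (g (prj A x)) + norm (g (prj (-A) y)) \<le> 1"
proof -
  have yc: "y \<in> c0" and yn: "\<And>n. norm (y n) \<le> 1"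
    using y c0_norm_ge[of y] unfolding c0_ball_def by (auto intro: order_trans)
  obtain \<omega> where w: "norm \<omega> = 1" "norm (g (prj A x) + \<omega> * g (prj (-A) y)) = norm (g (prj A x)) + norm (g (prj (-A) y))"
    using align by blast
  define z where "z = (\<lambda>n. prj A x n + \<omega> * prj (-A) y n)"
  have zc: "z \<in> c0" unfolding z_def by (intro c0_add Pc c0_scale Qc yc)
  have "g z = g (prj A x) + g (\<lambda>n. \<omega> * prj (-A) y n)"
    unfolding z_def by (rule lin1_add[OF g Pc c0_scale[OF Qc[OF yc]]])
  also have "\<dots> = g (prj A x) + \<omega> * g (prj (-A) y)" using lin1_hom[OF g Qc[OF yc]] by simp
  finally have gz: "norm (g z) = norm (g (prj A x)) + norm (g (prj (-A) y))" using w by simp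
  have "c0_norm z \<le> 1" by (rule c0_norm_le) (auto simp: z_def prj_def xle yn norm_mult w)
  then show ?thesis using lin1_bnd[OF g zc] gz by simp
qed

lemma G2: assumes g: "lin1 g" and c: "norm c = 1" and d: "norm (g x - c) \<le> \<delta>"
  shows "(\<forall>y\<in>c0_ball. norm (g (prj (-A) y)) \<le> \<delta> / (1 - \<gamma>)) \<and> norm (g (prj A x) - c) \<le> \<delta> / (1 - \<gamma>)"
proof -
  define q where "q = norm (g (prj (-A) x))"
  define \<alpha> where "\<alpha> = g (prj A x)"
  define y0 where "y0 = (\<lambda>n. of_real (1/\<gamma>) * prj (-A) x n)"
  have y0c: "y0 \<in> c0" unfolding y0_def by (intro c0_scale Qc xc)
  have "c0_norm y0 \<le> 1" 
  proof (rule c0_norm_le)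
    fix n show "norm (y0 n) \<le> 1"
      using off[of n] \<gamma>0 by (auto simp: y0_def prj_def norm_divide field_simps)
  qed
  then have y0b: "y0 \<in> c0_ball" using y0c by (simp add: c0_ball_def)
  have "prj (-A) y0 = y0" by (auto simp: y0_def prj_def)
  then have "g (prj (-A) y0) = of_real (1/\<gamma>) * g (prj (-A) x)"
    using lin1_hom[OF g Qc[OF xc], of "of_real (1/\<gamma>)"] by (simp only: y0_def)
  then have "norm (g (prj (-A) y0)) = q / \<gamma>" using \<gamma>0 by (simp add: q_def norm_divide)
  then have h1: "norm \<alpha> + q / \<gamma> \<le> 1" using G1[OF g y0b] by (simp add: \<alpha>_def)
  have gx: "g x = \<alpha> + g (prj (-A) x)"
    using lin1_add[OF g Pc[of x] Qc[OF xc]] split[of x] unfolding \<alpha>_def by metis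
  have "1 - \<delta> \<le> norm (g x)" using d c norm_triangle_ineq3[of c "g x"] by (simp add: norm_minus_commute)
  also have "\<dots> \<le> norm \<alpha> + q" unfolding gx q_def by (rule norm_triangle_ineq)
  finally have h2: "1 - \<delta> \<le> norm \<alpha> + q" .
  have "q / \<gamma> - q \<le> \<delta>" using h1 h2 by linarith
  then have "q * (1 - \<gamma>) \<le> \<delta> * \<gamma>" using \<gamma>0 by (simp add: field_simps)
  then have qb: "\<delta> + q \<le> \<delta> / (1 - \<gamma>)" using \<gamma>1 by (simp add: field_simps)
  have A1: "norm (g (prj (-A) y)) \<le> \<delta> / (1 - \<gamma>)" if y: "y \<in> c0_ball" for y
    using G1[OF g y] h2 qb by (simp add: \<alpha>_def)
  have "norm (\<alpha> - c) = norm ((g x - c) - g (prj (-A) x))" unfolding gx by (simp add: algebra_simps)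
  also have "\<dots> \<le> \<delta> + q" using d norm_triangle_ineq4[of "g x - c" "g (prj (-A) x)"] by (simp add: q_def)
  finally show ?thesis using A1 qb by (simp add: \<alpha>_def)
qed

end


definition has_re :: "('a::real_normed_field \<Rightarrow> real) \<Rightarrow> bool" where
  "has_re re \<longleftrightarrow> (\<forall>u v. re (u + v) = re u + re v) \<and> (\<forall>r u. re (of_real r * u) = r * re u) \<and> re 1 = 1 \<and>
     (\<forall>a z. (norm (of_real a - z))\<^sup>2 = a\<^sup>2 - 2 * a * re z + (norm z)\<^sup>2)"

lemma re_add: "has_re re \<Longrightarrow> re (u + v) = re u + re v" unfolding has_re_def by blast
lemma re_scale: "has_re re \<Longrightarrow> re (of_real r * u) = r * re u" unfolding has_re_def by blast
lemma re_one: "has_re re \<Longrightarrow> re 1 = 1" unfolding has_re_def by blast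
lemma re_id: "has_re re \<Longrightarrow> (norm (of_real a - z))\<^sup>2 = a\<^sup>2 - 2 * a * re z + (norm z)\<^sup>2" unfolding has_re_def by blast
lemma re_zero: "has_re re \<Longrightarrow> re 0 = 0" using re_add[of re 0 0] by simp
lemma re_minus: "has_re re \<Longrightarrow> re (- u) = - re u" using re_add[of re u "-u"] re_zero[of re] by simp
lemma re_diff: "has_re re \<Longrightarrow> re (u - v) = re u - re v" using re_add[of re u "-v"] re_minus[of re v] by simp
lemma re_of_real: "has_re re \<Longrightarrow> re (of_real r) = r" using re_scale[of re r 1] re_one[of re] by simp
lemma re_sum: "has_re re \<Longrightarrow> re (\<Sum>j\<in>B. f j) = (\<Sum>j\<in>B. re (f j))"
  by (induction B rule: infinite_finite_induct) (auto simp: re_zero re_add)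
lemma re_le_norm: assumes h: "has_re re" shows "re z \<le> norm z"
proof (cases "z = 0")
  case True then show ?thesis using re_zero[OF h] by simp
next
  case False
  have "0 \<le> (norm (of_real (norm z) - z))\<^sup>2" by simp
  also have "\<dots> = 2 * norm z * (norm z - re z)" using re_id[OF h, of "norm z" z] by (simp add: algebra_simps power2_eq_square)
  finally have "0 \<le> norm z - re z" using False by (simp add: zero_le_mult_iff)
  then show ?thesis by simp
qed

lemma has_re_real: "has_re (\<lambda>x::real. x)"
  unfolding has_re_def by (simp add: power2_eq_square algebra_simps)

lemma has_re_complex: "has_re Re"
  unfolding has_re_def cmod_power2
  by (simp add: power2_eq_square algebra_simps)

definition zz :: "((nat \<Rightarrow> 'a::real_normed_field) \<Rightarrow> 'a) \<Rightarrow> (nat \<Rightarrow> 'a) \<Rightarrow> 'a \<Rightarrow> nat \<Rightarrow> 'a" where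
  "zz g x c j = g (ee j) * x j / c"
definition ww :: "((nat \<Rightarrow> 'a::real_normed_field) \<Rightarrow> 'a) \<Rightarrow> (nat \<Rightarrow> 'a) \<Rightarrow> 'a \<Rightarrow> nat set \<Rightarrow> nat \<Rightarrow> real" where
  "ww g x c B j = norm (zz g x c j) + (1 - (\<Sum>i\<in>B. norm (zz g x c i))) / real (card B)"
definition ss :: "((nat \<Rightarrow> 'a::real_normed_field) \<Rightarrow> 'a) \<Rightarrow> (nat \<Rightarrow> 'a) \<Rightarrow> 'a \<Rightarrow> nat set \<Rightarrow> (nat \<Rightarrow> 'a) \<Rightarrow> 'a" where
  "ss g x c B y = (\<Sum>j\<in>B. c * of_real (ww g x c B j) * y j / x j)"

locale rowset = gapset x A \<gamma> for x :: "nat \<Rightarrow> 'a::real_normed_field" and A \<gamma> +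
  fixes re :: "'a \<Rightarrow> real" and g :: "(nat \<Rightarrow> 'a) \<Rightarrow> 'a" and c :: 'a
  assumes hre: "has_re re" and g: "lin1 g" and c: "norm c = 1" and Ane: "A \<noteq> {}"
begin

lemma xA: "j \<in> A \<Longrightarrow> norm (x j) = 1" using Adef by simp
lemma xA0: "j \<in> A \<Longrightarrow> x j \<noteq> 0" using xA by fastforce
lemma c0': "c \<noteq> 0" using c by auto
lemma nz: "j \<in> A \<Longrightarrow> norm (zz g x c j) = norm (g (ee j))"
  using xA c by (simp add: zz_def norm_mult norm_divide)
lemma sumz: "(\<Sum>j\<in>A. norm (zz g x c j)) \<le> 1"
  using norming[OF g fin] nz by simp
lemma mpos: "0 < real (card A)" using Ane fin by (simp add: card_gt_0_iff)
lemma ww_nonneg: "0 \<le> ww g x c A j"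
  using sumz mpos unfolding ww_def by (intro add_nonneg_nonneg divide_nonneg_pos) auto
lemma ww_sum: "(\<Sum>j\<in>A. ww g x c A j) = 1"
  using mpos unfolding ww_def by (simp add: sum.distrib)

lemma R1: "ss g x c A x = c"
proof -
  have "ss g x c A x = (\<Sum>j\<in>A. c * of_real (ww g x c A j))"
    unfolding ss_def using xA0 by (intro sum.cong) (auto simp: field_simps)
  also have "\<dots> = c * of_real (\<Sum>j\<in>A. ww g x c A j)" by (simp add: sum_distrib_left)
  finally show ?thesis using ww_sum by simp
qed

lemma R2: assumes y: "y \<in> c0" shows "norm (ss g x c A y) \<le> c0_norm y"
proof -
  have "norm (ss g x c A y) \<le> (\<Sum>j\<in>A. norm (c * of_real (ww g x c A j) * y j / x j))"
    unfolding ss_def by (rule norm_sum)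
  also have "\<dots> \<le> (\<Sum>j\<in>A. ww g x c A j * c0_norm y)"
  proof (rule sum_mono)
    fix j assume j: "j \<in> A"
    have "norm (c * of_real (ww g x c A j) * y j / x j) = ww g x c A j * norm (y j)"
      using xA[OF j] c ww_nonneg[of j] by (simp add: norm_mult norm_divide)
    also have "\<dots> \<le> ww g x c A j * c0_norm y" using c0_norm_ge[OF y] ww_nonneg by (simp add: mult_left_mono)
    finally show "norm (c * of_real (ww g x c A j) * y j / x j) \<le> ww g x c A j * c0_norm y" .
  qed
  also have "\<dots> = c0_norm y" using ww_sum by (simp add: sum_distrib_right[symmetric])
  finally show ?thesis .
qed

lemma R3: assumes y: "y \<in> c0_ball"
  shows "norm (ss g x c A y - g y) \<le> real (card A) * sqrt (2 * (norm (g x - c) / (1 - \<gamma>))) + 2 * (norm (g x - c) / (1 - \<gamma>))"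
proof -
  define D where "D = norm (g x - c) / (1 - \<gamma>)"
  have GG: "(\<forall>y\<in>c0_ball. norm (g (prj (-A) y)) \<le> D) \<and> norm (g (prj A x) - c) \<le> D"
    unfolding D_def by (rule G2[OF g c]) simp
  define z where "z j = zz g x c j" for j
  define w where "w j = ww g x c A j" for j
  have yc: "y \<in> c0" and yk: "\<And>n. norm (y n) \<le> 1"
    using y c0_norm_ge[of y] unfolding c0_ball_def by (auto intro: order_trans)
  have bz: "g (ee j) = c * z j / x j" if "j \<in> A" for j
    using xA0[OF that] c0' by (simp add: z_def zz_def field_simps)
  have gy: "g y = g (prj A y) + g (prj (-A) y)"
    using lin1_add[OF g Pc[of y] Qc[OF yc]] split[of y] by metis
  have diff: "ss g x c A y - g (prj A y) = (\<Sum>j\<in>A. (c / x j) * (of_real (w j) - z j) * y j)"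
    unfolding ss_def lin1_prj[OF g fin] sum_subtractf[symmetric]
    by (rule sum.cong) (auto simp: bz w_def field_simps xA0)
  have t1: "norm (ss g x c A y - g (prj A y)) \<le> (\<Sum>j\<in>A. norm (of_real (w j) - z j))"
    unfolding diff
  proof (rule order_trans[OF norm_sum sum_mono])
    fix j assume j: "j \<in> A"
    have "norm ((c / x j) * (of_real (w j) - z j) * y j) = norm (of_real (w j) - z j) * norm (y j)"
      using xA[OF j] c by (simp add: norm_mult norm_divide)
    also have "\<dots> \<le> norm (of_real (w j) - z j)" using yk[of j] by (simp add: mult_right_le_one_le)
    finally show "norm ((c / x j) * (of_real (w j) - z j) * y j) \<le> norm (of_real (w j) - z j)" .
  qed
  define Z where "Z = (\<Sum>j\<in>A. z j)"
  have "g (prj A x) = (\<Sum>j\<in>A. x j * g (ee j))" by (rule lin1_prj[OF g fin])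
  also have "\<dots> = (\<Sum>j\<in>A. c * z j)" by (rule sum.cong) (auto simp: bz xA0)
  also have "\<dots> = c * Z" by (simp add: Z_def sum_distrib_left)
  finally have "g (prj A x) - c = c * (Z - 1)" by (simp add: algebra_simps)
  then have ZD: "norm (Z - 1) \<le> D" using GG c by (simp add: norm_mult)
  have sumz': "(\<Sum>j\<in>A. norm (z j)) \<le> 1" using sumz by (simp add: z_def)
  have zle1: "norm (z j) \<le> 1" if "j \<in> A" for j
    using member_le_sum[of j A "\<lambda>j. norm (z j)"] that fin sumz' by simp
  have "1 - norm Z \<le> norm (Z - 1)" using norm_triangle_ineq2[of 1 Z] by (simp add: norm_minus_commute)
  moreover have "norm Z \<le> (\<Sum>j\<in>A. norm (z j))" unfolding Z_def by (rule norm_sum)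
  ultimately have c1: "1 - (\<Sum>j\<in>A. norm (z j)) \<le> D" using ZD by linarith
  define t where "t j = norm (z j) - re (z j)" for j
  have t0: "0 \<le> t j" for j using re_le_norm[OF hre] by (simp add: t_def)
  have "(\<Sum>j\<in>A. t j) = (\<Sum>j\<in>A. norm (z j)) - re Z"
    by (simp add: t_def sum_subtractf Z_def re_sum[OF hre])
  also have "\<dots> \<le> 1 - re Z" using sumz' by simp
  also have "\<dots> = re (1 - Z)" using re_diff[OF hre] re_one[OF hre] by simp
  also have "\<dots> \<le> norm (1 - Z)" by (rule re_le_norm[OF hre])
  also have "\<dots> \<le> D" using ZD by (simp add: norm_minus_commute)
  finally have tsum: "(\<Sum>j\<in>A. t j) \<le> D" .
  have each: "norm (of_real (norm (z j)) - z j) \<le> sqrt (2 * D)" if j: "j \<in> A" for j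
  proof (rule real_le_rsqrt)
    have "(norm (of_real (norm (z j)) - z j))\<^sup>2 = 2 * norm (z j) * t j"
      using re_id[OF hre, of "norm (z j)" "z j"] by (simp add: t_def algebra_simps power2_eq_square)
    also have "\<dots> \<le> 2 * t j" using zle1[OF j] t0[of j] by (simp add: mult_left_le_one_le)
    also have "\<dots> \<le> 2 * D" using member_le_sum[of j A t] j fin t0 tsum by simp
    finally show "(norm (of_real (norm (z j)) - z j))\<^sup>2 \<le> 2 * D" .
  qed
  define r where "r = (1 - (\<Sum>i\<in>A. norm (z i))) / real (card A)"
  have r0: "0 \<le> r" using sumz' mpos by (simp add: r_def)
  have wj: "w j = norm (z j) + r" for j by (simp add: w_def ww_def r_def z_def)
  have t2: "norm (of_real (w j) - z j) \<le> norm (of_real (norm (z j)) - z j) + r" for j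
  proof -
    have "of_real (w j) - z j = (of_real (norm (z j)) - z j) + of_real r" by (simp add: wj)
    then show ?thesis using norm_triangle_ineq[of "of_real (norm (z j)) - z j" "of_real r :: 'a"] r0 by (simp only: norm_of_real abs_of_nonneg)
  qed
  have "(\<Sum>j\<in>A. norm (of_real (w j) - z j)) \<le> (\<Sum>j\<in>A. norm (of_real (norm (z j)) - z j) + r)"
    by (rule sum_mono) (rule t2)
  also have "\<dots> = (\<Sum>j\<in>A. norm (of_real (norm (z j)) - z j)) + real (card A) * r" by (simp add: sum.distrib)
  also have "real (card A) * r = 1 - (\<Sum>i\<in>A. norm (z i))" using mpos by (simp add: r_def)
  also have "(\<Sum>j\<in>A. norm (of_real (norm (z j)) - z j)) \<le> real (card A) * sqrt (2 * D)"
    using sum_bounded_above[of A "\<lambda>j. norm (of_real (norm (z j)) - z j)" "sqrt (2 * D)"] each by simp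
  finally have t3: "(\<Sum>j\<in>A. norm (of_real (w j) - z j)) \<le> real (card A) * sqrt (2 * D) + D" using c1 by simp
  have "norm (ss g x c A y - g y) = norm ((ss g x c A y - g (prj A y)) - g (prj (-A) y))"
    by (simp add: gy algebra_simps)
  also have "\<dots> \<le> norm (ss g x c A y - g (prj A y)) + norm (g (prj (-A) y))" by (rule norm_triangle_ineq4)
  also have "\<dots> \<le> (real (card A) * sqrt (2 * D) + D) + D" using t1 t3 GG y by (intro add_mono) auto
  finally show ?thesis by (simp add: D_def)
qed

end


lemma ss_add: "ss g x c B (\<lambda>n. y1 n + y2 n) = ss g x c B y1 + ss g x c B y2"
  unfolding ss_def by (simp add: sum.distrib[symmetric] add_divide_distrib distrib_left)
lemma ss_hom: "ss g x c B (\<lambda>n. d * y n) = d * ss g x c B y"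
  unfolding ss_def by (simp add: sum_distrib_left mult.left_commute)

lemma c0_fin_big: assumes "x \<in> c0" "0 < e" shows "finite {j. e \<le> norm (x j)}"
proof -
  obtain N where N: "\<forall>n\<ge>N. norm (x n) < e" using assms unfolding c0_def LIMSEQ_iff by auto
  have "{j. e \<le> norm (x j)} \<subseteq> {..<N}" using N by (auto simp: not_le[symmetric])
  then show ?thesis using finite_subset by blast
qed

lemma E0_bound: assumes e: "0 < e" and m: "1 \<le> m"
  defines "D0 \<equiv> min (e\<^sup>2 / (16 * m\<^sup>2)) (e / 8)"
  shows "0 < D0" "m * sqrt (2 * D0) + 2 * D0 < e"
proof -
  show D0: "0 < D0" using e m by (simp add: D0_def)
  have "2 * D0 \<le> e\<^sup>2 / (8 * m\<^sup>2)" using D0_def by (simp add: field_simps)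
  also have "\<dots> < (e / (2 * m))\<^sup>2" using e m by (simp add: field_simps power2_eq_square)
  finally have "sqrt (2 * D0) < e / (2 * m)" using e m by (intro real_less_lsqrt) auto
  then have "m * sqrt (2 * D0) < m * (e / (2 * m))" using m by (intro mult_strict_left_mono) auto
  also have "\<dots> = e / 2" using m by simp
  finally have a: "m * sqrt (2 * D0) < e / 2" .
  have "2 * D0 \<le> e / 4" using D0_def by simp
  then show "m * sqrt (2 * D0) + 2 * D0 < e" using a D0 by linarith
qed


lemma main_pt:
  fixes re :: "'a::real_normed_field \<Rightarrow> real" and x :: "nat \<Rightarrow> 'a" and f :: "(nat \<Rightarrow> 'a) \<Rightarrow> 'a"
  assumes hre: "has_re re" and e: "0 < \<epsilon>" and p: "(x, f) \<in> c0_Pi"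
  shows "\<exists>\<eta>>0. \<forall>T :: (nat \<Rightarrow> 'a) \<Rightarrow> (nat \<Rightarrow> 'a). c0_op T \<and> c0_numrad T = 1 \<and> norm (f (T x)) > 1 - \<eta> \<longrightarrow>
     (\<exists>S :: (nat \<Rightarrow> 'a) \<Rightarrow> (nat \<Rightarrow> 'a). c0_op S \<and> c0_numrad S = 1 \<and> norm (f (S x)) = 1 \<and>
        c0_op_norm (\<lambda>y n. S y n - T y n) < \<epsilon>)"
proof -
  have xc: "x \<in> c0" and xn: "c0_norm x = 1" and ff: "c0_functional f" and fd: "c0_dual_norm f = 1"
    and fx: "f x = 1" using Pi_D[OF p] by auto
  have fl: "lin1 f" by (rule functional_lin1[OF ff fd])
  have xle: "norm (x n) \<le> 1" for n using c0_norm_ge[OF xc, of n] xn by simp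
  define A where "A = {j. norm (x j) = 1}"
  have finA: "finite A"
    by (rule finite_subset[OF _ c0_fin_big[OF xc, of "1/2"]]) (auto simp: A_def)
  define F' where "F' = {j. 1/2 \<le> norm (x j) \<and> norm (x j) \<noteq> 1}"
  have finF': "finite F'" by (rule finite_subset[OF _ c0_fin_big[OF xc, of "1/2"]]) (auto simp: F'_def)
  define \<gamma> where "\<gamma> = Max (insert (1/2) ((\<lambda>j. norm (x j)) ` F'))"
  have g12: "1/2 \<le> \<gamma>" unfolding \<gamma>_def using finF' by (intro Max_ge) auto
  have g1: "\<gamma> < 1" unfolding \<gamma>_def
    by (subst Max_less_iff) (use finF' xle in \<open>auto simp: F'_def less_le\<close>)
  have off: "norm (x j) \<le> \<gamma>" if "j \<notin> A" for j
  proof (cases "1/2 \<le> norm (x j)")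
    case True then have "j \<in> F'" using that by (simp add: F'_def A_def)
    then show ?thesis unfolding \<gamma>_def using finF' by (intro Max_ge) auto
  next
    case False then show ?thesis using g12 by simp
  qed
  have GS: "gapset x A \<gamma>" by unfold_locales (use xc xn finA g12 g1 off in \<open>auto simp: A_def\<close>)
  interpret gs: gapset x A \<gamma> by (rule GS)
  have g0: "0 < 1 - \<gamma>" using g1 by simp
  have fQ0: "f (prj (-A) y) = 0" if y: "y \<in> c0_ball" for y
    using conjunct1[OF gs.G2[OF fl, of 1 0]] y fx by simp
  have fQ: "f (prj (-A) u) = 0" if u: "u \<in> c0" for u
  proof -
    have "norm (f (prj (-A) u)) \<le> 0 * c0_norm u"
    proof (rule scale_bound[where h="\<lambda>u. f (prj (-A) u)", OF _ _ u])
      fix d :: 'a and v :: "nat \<Rightarrow> 'a" assume v: "v \<in> c0"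
      have "prj (-A) (\<lambda>n. d * v n) = (\<lambda>n. d * prj (-A) v n)" by (auto simp: prj_def)
      then show "f (prj (-A) (\<lambda>n. d * v n)) = d * f (prj (-A) v)" using lin1_hom[OF fl gs.Qc[OF v]] by simp
    next
      fix y :: "nat \<Rightarrow> 'a" assume "y \<in> c0_ball" then show "norm (f (prj (-A) y)) \<le> 0" using fQ0 by simp
    qed
    then show ?thesis by simp
  qed
  define a where "a j = f (ee j)" for j
  have frep: "f u = (\<Sum>j\<in>A. u j * a j)" if u: "u \<in> c0" for u
  proof -
    have "f u = f (prj A u) + f (prj (-A) u)"
      using lin1_add[OF fl gs.Pc[of u] gs.Qc[OF u]] gs.split[of u] by metis
    then show ?thesis using fQ[OF u] lin1_prj[OF fl finA] by (simp add: a_def)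
  qed
  have fxs: "(\<Sum>j\<in>A. x j * a j) = 1" using frep[OF xc] fx by simp
  have suma: "(\<Sum>j\<in>A. norm (a j)) \<le> 1" using norming[OF fl finA] by (simp add: a_def)
  have Ane: "A \<noteq> {}" using fxs by auto
  have xa: "x j * a j = of_real (norm (a j))" if j: "j \<in> A" for j
  proof -
    define t where "t i = norm (a i) - re (x i * a i)" for i
    have nxa: "norm (x i * a i) = norm (a i)" if "i \<in> A" for i using that by (simp add: norm_mult A_def)
    have t0: "0 \<le> t i" if "i \<in> A" for i using re_le_norm[OF hre, of "x i * a i"] nxa[OF that] by (simp add: t_def)
    have "(\<Sum>i\<in>A. t i) = (\<Sum>i\<in>A. norm (a i)) - re (\<Sum>i\<in>A. x i * a i)"
      by (simp add: t_def sum_subtractf re_sum[OF hre])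
    also have "\<dots> \<le> 0" using suma fxs re_one[OF hre] by simp
    moreover have "0 \<le> (\<Sum>i\<in>A. t i)" using t0 by (simp add: sum_nonneg)
    ultimately have "(\<Sum>i\<in>A. t i) = 0" by linarith
    then have tj: "t j = 0" using sum_nonneg_eq_0_iff[OF finA, of t] t0 j by blast
    have "(norm (of_real (norm (a j)) - x j * a j))\<^sup>2 = 2 * norm (a j) * t j"
      using re_id[OF hre, of "norm (a j)" "x j * a j"] nxa[OF j] by (simp add: t_def algebra_simps power2_eq_square)
    then show ?thesis using tj by simp
  qed
  define As where "As = {j\<in>A. a j \<noteq> 0}"
  have finAs: "finite As" using finA by (simp add: As_def)
  have Asne: "As \<noteq> {}"
  proof
    assume "As = {}"
    then have "\<forall>j\<in>A. a j = 0" by (auto simp: As_def)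
    then show False using fxs by simp
  qed
  define amin where "amin = Min ((\<lambda>j. norm (a j)) ` As)"
  have amin0: "0 < amin" unfolding amin_def using finAs Asne by (simp add: As_def)
  have aminle: "amin \<le> norm (a j)" if "j \<in> As" for j unfolding amin_def using finAs that by simp
  define m where "m = real (card A)"
  have m1: "1 \<le> m" using finA Ane by (simp add: m_def Suc_le_eq card_gt_0_iff)
  define D0 where "D0 = min (\<epsilon>\<^sup>2 / (16 * m\<^sup>2)) (\<epsilon> / 8)"
  have D0: "0 < D0" "m * sqrt (2 * D0) + 2 * D0 < \<epsilon>" using E0_bound[OF e m1] unfolding D0_def by auto
  define \<delta>0 where "\<delta>0 = D0 * (1 - \<gamma>)"
  have d0: "0 < \<delta>0" using D0 g0 by (simp add: \<delta>0_def)
  have D0eq: "\<delta>0 / (1 - \<gamma>) = D0" using g0 by (simp add: \<delta>0_def)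
  define \<eta> where "\<eta> = min (1/2) (amin * \<delta>0\<^sup>2 / 2)"
  have eta0: "0 < \<eta>" using amin0 d0 by (simp add: \<eta>_def)
  show ?thesis
  proof (intro exI[of _ \<eta>] conjI eta0 allI impI)
    fix T :: "(nat \<Rightarrow> 'a) \<Rightarrow> (nat \<Rightarrow> 'a)"
    assume "c0_op T \<and> c0_numrad T = 1 \<and> 1 - \<eta> < norm (f (T x))"
    then have T: "c0_op T" and vT: "c0_numrad T = 1" and big: "1 - \<eta> < norm (f (T x))" by auto
    have Tn: "norm (T y k) \<le> c0_norm y" if "y \<in> c0" for y k by (rule op_norm1[OF T vT that])
    have rowl: "lin1 (\<lambda>y. T y k)" for k by (rule row_lin1[OF T vT])
    define \<rho> where "\<rho> = norm (f (T x))"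
    have rho: "1/2 < \<rho>" "1 - \<eta> < \<rho>" using big by (auto simp: \<rho>_def \<eta>_def)
    define \<mu> where "\<mu> = f (T x) / of_real \<rho>"
    have rho0: "\<rho> \<noteq> 0" using rho by simp
    then have fT0: "f (T x) \<noteq> 0" by (simp add: \<rho>_def)
    have mu1: "norm \<mu> = 1" using rho fT0 by (simp add: \<mu>_def norm_divide \<rho>_def)
    have mu0: "\<mu> \<noteq> 0" using mu1 by auto
    have fTx: "f (T x) = \<mu> * of_real \<rho>" using rho by (simp add: \<mu>_def)
    define v where "v j = T x j / (x j * \<mu>)" for j
    have xA0: "x j \<noteq> 0" if "j \<in> A" for j using that by (auto simp: A_def)
    have v1: "norm (v j) \<le> 1" if "j \<in> A" for j
      using Tn[OF xc, of j] xn that mu1 by (simp add: v_def norm_divide norm_mult A_def)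
    have "f (T x) = (\<Sum>j\<in>A. T x j * a j)" by (rule frep[OF op_c0[OF T xc]])
    also have "\<dots> = (\<Sum>j\<in>A. \<mu> * (of_real (norm (a j)) * v j))"
    proof (rule sum.cong)
      fix j assume j: "j \<in> A"
      have "\<mu> * (of_real (norm (a j)) * v j) = \<mu> * (x j * a j) * T x j / (x j * \<mu>)"
        unfolding xa[OF j] v_def by simp
      also have "\<dots> = T x j * a j" using xA0[OF j] mu0 by (simp add: field_simps)
      finally show "T x j * a j = \<mu> * (of_real (norm (a j)) * v j)" by simp
    qed simp
    also have "\<dots> = \<mu> * (\<Sum>j\<in>A. of_real (norm (a j)) * v j)" by (simp add: sum_distrib_left)
    finally have "(\<Sum>j\<in>A. of_real (norm (a j)) * v j) = of_real \<rho>" using fTx mu0 by simp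
    then have "re (\<Sum>j\<in>A. of_real (norm (a j)) * v j) = \<rho>" using re_of_real[OF hre] by simp
    then have rsum: "(\<Sum>j\<in>A. norm (a j) * re (v j)) = \<rho>" by (simp add: re_sum[OF hre] re_scale[OF hre])
    define t where "t j = norm (a j) * (1 - re (v j))" for j
    have t0: "0 \<le> t j" if "j \<in> A" for j
      using re_le_norm[OF hre, of "v j"] v1[OF that] by (simp add: t_def)
    have "(\<Sum>j\<in>A. t j) = (\<Sum>j\<in>A. norm (a j)) - \<rho>"
      using rsum by (simp add: t_def algebra_simps sum_subtractf)
    also have "\<dots> < \<eta>" using suma rho by simp
    finally have tsum: "(\<Sum>j\<in>A. t j) < \<eta>" .
    have dk: "norm (T x k - \<mu> * x k) < \<delta>0" if k: "k \<in> As" for k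
    proof -
      have kA: "k \<in> A" using k by (simp add: As_def)
      have "t k \<le> (\<Sum>j\<in>A. t j)" using member_le_sum[of k A t] t0 kA finA by simp
      then have tk: "t k < \<eta>" using tsum by simp
      have nv: "(norm (v k))\<^sup>2 \<le> 1" by (rule power_le_one) (use v1[OF kA] in auto)
      have sq: "(norm (1 - v k))\<^sup>2 \<le> 2 * (1 - re (v k))"
        using re_id[OF hre, of 1 "v k"] nv by simp
      have "norm (a k) * (norm (1 - v k))\<^sup>2 \<le> 2 * t k"
        using mult_left_mono[OF sq, of "norm (a k)"] by (simp add: t_def algebra_simps)
      also have "\<dots> < 2 * \<eta>" using tk by simp
      also have "\<dots> \<le> amin * \<delta>0\<^sup>2" by (simp add: \<eta>_def)
      also have "\<dots> \<le> norm (a k) * \<delta>0\<^sup>2" using aminle[OF k] by (simp add: mult_right_mono)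
      finally have "(norm (1 - v k))\<^sup>2 < \<delta>0\<^sup>2" using k by (simp add: As_def)
      then have "norm (1 - v k) < \<delta>0" using d0 by (simp add: power2_less_imp_less)
      moreover have "T x k - \<mu> * x k = (x k * \<mu>) * (v k - 1)" using xA0[OF kA] mu0 by (simp add: v_def field_simps)
      then have "norm (T x k - \<mu> * x k) = norm (1 - v k)" using kA mu1
        by (simp add: norm_mult A_def norm_minus_commute)
      ultimately show ?thesis by simp
    qed
    have RS: "rowset x A \<gamma> re (\<lambda>y. T y k) (\<mu> * x k)" if "k \<in> As" for k
      unfolding rowset_def rowset_axioms_def
      using GS hre rowl that mu1 Ane by (auto simp: As_def A_def norm_mult)
    define S where "S y = (\<lambda>n. if n \<in> As then ss (\<lambda>y. T y n) x (\<mu> * x n) A y else T y n)" for y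
    have Sc: "S y \<in> c0" if "y \<in> c0" for y
      by (rule c0_finmod[OF op_c0[OF T that] finAs]) (simp add: S_def)
    have Sn: "c0_norm (S y) \<le> c0_norm y" if y: "y \<in> c0" for y
      by (rule c0_norm_le) (auto simp: S_def rowset.R2[OF RS y] Tn[OF y])
    have Sop: "c0_op S" unfolding c0_op_def
    proof (intro conjI ballI allI)
      show "\<And>y. y \<in> c0 \<Longrightarrow> S y \<in> c0" by (rule Sc)
      show "\<And>y z. y \<in> c0 \<Longrightarrow> z \<in> c0 \<Longrightarrow> S (\<lambda>n. y n + z n) = (\<lambda>n. S y n + S z n)"
        by (auto simp: S_def ss_add op_add[OF T])
      show "\<And>d y. y \<in> c0 \<Longrightarrow> S (\<lambda>n. d * y n) = (\<lambda>n. d * S y n)"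
        by (auto simp: S_def ss_hom op_hom[OF T])
      show "\<exists>C. \<forall>x\<in>c0. c0_norm (S x) \<le> C * c0_norm x" using Sn by (intro exI[of _ 1]) auto
    qed
    have Sx: "S x k * a k = \<mu> * (x k * a k)" if "k \<in> A" for k
    proof (cases "k \<in> As")
      case True then show ?thesis using rowset.R1[OF RS[OF True]] by (simp add: S_def)
    next
      case False then have "a k = 0" using that by (simp add: As_def)
      then show ?thesis by simp
    qed
    have "f (S x) = (\<Sum>k\<in>A. S x k * a k)" by (rule frep[OF Sc[OF xc]])
    also have "\<dots> = \<mu> * (\<Sum>k\<in>A. x k * a k)" by (simp add: Sx sum_distrib_left)
    finally have fSx: "norm (f (S x)) = 1" using fxs mu1 by simp
    have nS: "c0_numrad S = 1"
    proof (rule antisym)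
      have bnd: "norm (g (S z)) \<le> 1" if zg: "(z, g) \<in> c0_Pi" for z g
      proof -
        have D: "z \<in> c0" "c0_norm z = 1" using Pi_D[OF zg] by auto
        have "norm (g (S z)) \<le> c0_norm (S z)" by (rule Pi_bound[where T=S, OF zg Sc[OF D(1)]])
        also have "\<dots> \<le> 1" using Sn[OF D(1)] D(2) by simp
        finally show ?thesis .
      qed
      show "c0_numrad S \<le> 1" unfolding c0_numrad_def
      proof (rule cSUP_least)
        show "(c0_Pi :: ((nat \<Rightarrow> 'a) \<times> ((nat \<Rightarrow> 'a) \<Rightarrow> 'a)) set) \<noteq> {}" using p by blast
        fix pp :: "(nat \<Rightarrow> 'a) \<times> ((nat \<Rightarrow> 'a) \<Rightarrow> 'a)" assume "pp \<in> c0_Pi"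
        then show "norm (snd pp (S (fst pp))) \<le> 1" using bnd by (cases pp) simp
      qed
      show "1 \<le> c0_numrad S" using numrad_upper[OF Sop p] fSx by simp
    qed
    define E0 where "E0 = m * sqrt (2 * D0) + 2 * D0"
    have E0pos: "0 \<le> E0" using D0 m1 by (simp add: E0_def)
    have rowerr: "norm (S y n - T y n) \<le> E0" if y: "y \<in> c0_ball" for y n
    proof (cases "n \<in> As")
      case False then show ?thesis using E0pos by (simp add: S_def)
    next
      case True
      define \<delta> where "\<delta> = norm (T x n - \<mu> * x n)"
      have "norm (S y n - T y n) \<le> m * sqrt (2 * (\<delta> / (1 - \<gamma>))) + 2 * (\<delta> / (1 - \<gamma>))"
        using rowset.R3[OF RS[OF True] y] True by (simp add: S_def \<delta>_def m_def)
      also have "\<dots> \<le> m * sqrt (2 * D0) + 2 * D0"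
      proof -
        have "\<delta> / (1 - \<gamma>) \<le> D0" unfolding D0eq[symmetric] using dk[OF True] g0
          by (simp add: \<delta>_def divide_right_mono)
        then show ?thesis using m1 by (intro add_mono mult_left_mono real_sqrt_le_mono) auto
      qed
      finally show ?thesis by (simp add: E0_def)
    qed
    have "c0_op_norm (\<lambda>y n. S y n - T y n) \<le> E0" unfolding c0_op_norm_def
    proof (rule cSUP_least)
      show "c0_ball \<noteq> ({} :: (nat \<Rightarrow> 'a) set)" using ball0 by blast
      fix y :: "nat \<Rightarrow> 'a" assume "y \<in> c0_ball"
      then show "c0_norm (\<lambda>n. S y n - T y n) \<le> E0" by (intro c0_norm_le rowerr)
    qed
    then have "c0_op_norm (\<lambda>y n. S y n - T y n) < \<epsilon>" using D0 by (simp add: E0_def)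
    then show "\<exists>S :: (nat \<Rightarrow> 'a) \<Rightarrow> (nat \<Rightarrow> 'a). c0_op S \<and> c0_numrad S = 1 \<and> norm (f (S x)) = 1 \<and>
        c0_op_norm (\<lambda>y n. S y n - T y n) < \<epsilon>" using Sop nS fSx by blast
  qed
qed


lemma main2: fixes re :: "'a::real_normed_field \<Rightarrow> real" assumes h: "has_re re"
  shows "c0_Lpp_nu TYPE('a)"
  unfolding c0_Lpp_nu_def by (auto intro!: main_pt[OF h])

theorem theorem3p5:
  shows "c0_Lpp_nu TYPE(real) \<and> c0_Lpp_nu TYPE(complex)"
  using main2[OF has_re_real] main2[OF has_re_complex] by simp

end
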